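(* Let $f\in\mathrm{Lip}_{[2]}(\mathbb{R})$ with $\|f\|_{\mathrm{Lip}_{[2]}(\mathbb{R})}\le 1$. Then for every $t\ge0$, $\mathbf{P}^0_t f\in\mathrm{Lip}_{[2]}(\mathbb{R})$: $\mathbf{P}^0_t f$ is $1$-Lipschitz and its derivative is $2$-Lipschitz. Furthermore $\mathscr{L}_0\mathbf{P}^0_t f$ is well defined and, for $t>0$, \[ \|\mathscr{L}_0\mathbf{P}^0_t f\|_\infty\le \frac{2}{1-e^{-t}}\,\|f'\|_\infty . \]
   Context: $Z$ denotes a standard Gumbel random variable (density $e^{-(x+e^{-x})}$ on $\mathbb{R}$). For $t\ge0$, $\mathbf{P}^0_t f(x)=\mathbb{E}\big[f\big(\max(x-t,\ Z+\log(1-e^{-t}))\big)\big]$ (convention $\log 0=-\infty$). $\mathscr{L}_0 f(x)=-f'(x)+e^{-x}\mathbb{E}[f'(x+Y)]$ with $Y\sim\mathcal{E}(1)$, which is the generator of $(\mathbf{P}^0_t)_{t\ge0}$. $\mathrm{Lip}_{[2]}(\mathbb{R})$ is the set of Lipschitz $f:\mathbb{R}\to\mathbb{R}$ whose derivative has a Lipschitz representative, with semi-norm $\|f\|_{\mathrm{Lip}_{[2]}(\mathbb{R})}=\max(\|f\|_{\mathrm{Lip}},\|f'\|_{\mathrm{Lip}})$, $\|g\|_{\mathrm{Lip}}$ being the best Lipschitz constant. *)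

theory Defs
  imports "HOL-Analysis.Analysis"
begin

definition gumbel_density :: "real \<Rightarrow> real" where
  "gumbel_density x = exp (- (x + exp (- x)))"

text \<open>The semigroup P^0_t; for t = 0 the convention log 0 = -infinity gives P^0_0 f = f.\<close>
definition P0 :: "real \<Rightarrow> (real \<Rightarrow> real) \<Rightarrow> real \<Rightarrow> real" where
  "P0 t f x = (if t = 0 then f x
     else (\<integral>z. gumbel_density z * f (max (x - t) (z + ln (1 - exp (- t)))) \<partial>lborel))"

definition L0 :: "(real \<Rightarrow> real) \<Rightarrow> real \<Rightarrow> real" where
  "L0 g x = - deriv g x + exp (- x) * (LINT y:{0..}|lborel. exp (- y) * deriv g (x + y))"

definition lip2 :: "(real \<Rightarrow> real) \<Rightarrow> bool" where
  "lip2 f \<longleftrightarrow> (\<exists>C. C-lipschitz_on UNIV f) \<and>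
     (\<exists>g C. (\<forall>x. (f has_real_derivative g x) (at x)) \<and> C-lipschitz_on UNIV g)"

end

theory Submission
  imports Defs "HOL-Real_Asymp.Real_Asymp"
begin

lemma lip_of_deriv:
  fixes g g' :: "real \<Rightarrow> real"
  assumes d: "\<And>x. (g has_real_derivative g' x) (at x)" and b: "\<And>x. \<bar>g' x\<bar> \<le> C" and C: "0 \<le> C"
  shows "C-lipschitz_on UNIV g"
proof (rule lipschitz_on_leI[OF _ C])
  fix x y :: real assume "x \<le> y"
  show "dist (g x) (g y) \<le> C * dist x y"
  proof (cases "x = y")
    case False
    with \<open>x \<le> y\<close> have "x < y" by simp
    from MVT2[OF this, of g g'] d obtain z where "g y - g x = (y - x) * g' z" by blast
    then have "\<bar>g y - g x\<bar> = \<bar>y - x\<bar> * \<bar>g' z\<bar>" by (simp add: abs_mult)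
    also have "\<dots> \<le> \<bar>y - x\<bar> * C" by (rule mult_left_mono[OF b]) simp
    finally show ?thesis by (simp add: dist_real_def abs_minus_commute mult.commute)
  qed (simp add: C)
qed

lemma deriv_bound_of_lip:
  fixes g :: "real \<Rightarrow> real"
  assumes L: "C-lipschitz_on UNIV g" and d: "(g has_real_derivative D) (at x)"
  shows "\<bar>D\<bar> \<le> C"
proof -
  have "((\<lambda>h. (g (x + h) - g x) / h) \<longlongrightarrow> D) (at 0)" using d by (simp add: DERIV_def)
  then have t: "((\<lambda>h. \<bar>(g (x + h) - g x) / h\<bar>) \<longlongrightarrow> \<bar>D\<bar>) (at 0)" by (rule tendsto_rabs)
  have "\<forall>\<^sub>F h in at 0. \<bar>(g (x + h) - g x) / h\<bar> \<le> C"
  proof (rule eventuallyI)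
    fix h :: real
    have "\<bar>g (x + h) - g x\<bar> \<le> C * \<bar>h\<bar>"
      using lipschitz_onD[OF L, of "x+h" x] by (simp add: dist_real_def)
    then show "\<bar>(g (x + h) - g x) / h\<bar> \<le> C"
      using lipschitz_on_nonneg[OF L]
      by (cases "h = 0") (auto simp: abs_divide divide_le_eq)
  qed
  from tendsto_le[OF trivial_limit_at tendsto_const t this] show ?thesis .
qed

lemma sbm:
  fixes g :: "real \<Rightarrow> real"
  assumes "continuous_on UNIV g" "A \<in> sets borel"
  shows "set_borel_measurable lborel A g"
  unfolding set_borel_measurable_def measurable_lborel1
  using borel_measurable_continuous_on_indicator[OF assms(2) continuous_on_subset[OF assms(1)]] by simp

definition G :: "real \<Rightarrow> real" where "G z = exp (- exp (- z))"

lemma G_deriv: "(G has_real_derivative gumbel_density z) (at z)"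
  unfolding G_def gumbel_density_def
  by (auto intro!: derivative_eq_intros simp: exp_add[symmetric] exp_minus[symmetric] algebra_simps)

lemma dens_nonneg: "0 \<le> gumbel_density z"
  by (simp add: gumbel_density_def)

lemma dens_le_exp: "gumbel_density z \<le> exp (- z)"
  by (simp add: gumbel_density_def)

lemma dens_le1: "gumbel_density z \<le> 1"
proof -
  have "gumbel_density z = exp (- z) * exp (- exp (- z))"
    by (simp add: gumbel_density_def exp_add[symmetric])
  also have "\<dots> = exp (- z) / exp (exp (- z))"
    by (simp add: exp_minus[of "exp (- z)"] divide_inverse)
  finally have e: "gumbel_density z = exp (- z) / exp (exp (- z))" .
  show ?thesis unfolding e
    using exp_ge_add_one_self[of "exp (- z)"] exp_ge_add_one_self[of "- z"] by simp
qed

lemma G_nonneg: "0 \<le> G z" and G_le1: "G z \<le> 1"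
  by (auto simp: G_def)

lemma G_lip: "1-lipschitz_on UNIV G"
  by (rule lip_of_deriv[OF G_deriv]) (use dens_nonneg dens_le1 in auto)

lemma dens_cont: "continuous_on UNIV gumbel_density"
  unfolding gumbel_density_def by (intro continuous_intros)

lemma G_integral:
  "set_integrable lborel (einterval (-\<infinity>) (ereal a)) gumbel_density"
  "(LBINT z=-\<infinity>..ereal a. gumbel_density z) = G a"
proof -
  have lim0: "(G \<longlongrightarrow> 0) at_bot"
    unfolding G_def by real_asymp
  have lima: "(G \<longlongrightarrow> G a) (at_left a)"
    using G_deriv[of a] DERIV_isCont continuous_within isCont_def
    by (metis filterlim_at_split)
  have d: "\<And>x. (G has_real_derivative gumbel_density x) (at x)" by (rule G_deriv)
  have c: "\<And>x. isCont gumbel_density x"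
    using dens_cont by (simp add: continuous_on_eq_continuous_at)
  show "set_integrable lborel (einterval (-\<infinity>) (ereal a)) gumbel_density"
       "(LBINT z=-\<infinity>..ereal a. gumbel_density z) = G a"
    using interval_integral_FTC_nonneg[of "-\<infinity>" "ereal a" G gumbel_density 0 "G a", OF _ d c]
      lim0 lima dens_nonneg by (auto simp: ereal_tendsto_simps1)
qed

lemma tail_integrable:
  fixes k :: "real \<Rightarrow> real"
  assumes L: "1-lipschitz_on UNIV k"
  shows "set_integrable lborel (einterval (ereal a) \<infinity>) (\<lambda>z. gumbel_density z * k z)"
proof -
  define K where "K = \<bar>k 0\<bar> + 2 * \<bar>a\<bar>"
  define F where "F z = - exp (- z) * (K + z + 1)" for z
  have d: "\<And>x. (F has_real_derivative exp (- x) * (K + x)) (at x)"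
    unfolding F_def by (auto intro!: derivative_eq_intros simp: algebra_simps)
  have c: "\<And>x. isCont (\<lambda>x. exp (- x) * (K + x)) x" by (intro continuous_intros)
  have limA: "(F \<longlongrightarrow> F a) (at_right a)"
    unfolding F_def by (intro tendsto_intros)
  have limB: "(F \<longlongrightarrow> 0) at_top"
    unfolding F_def by real_asymp
  have nn: "AE x in lborel. ereal a < ereal x \<longrightarrow> ereal x < \<infinity> \<longrightarrow> 0 \<le> exp (- x) * (K + x)"
    by (intro AE_I2) (auto simp: K_def)
  have I: "set_integrable lborel (einterval (ereal a) \<infinity>) (\<lambda>x. exp (- x) * (K + x))"
    using interval_integral_FTC_nonneg(1)[of "ereal a" \<infinity> F "\<lambda>x. exp (- x) * (K + x)" "F a" 0, OF _ d c nn]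
      limA limB by (auto simp: ereal_tendsto_simps1)
  show ?thesis
  proof (rule set_integrable_bound[OF I])
    show "set_borel_measurable lborel (einterval (ereal a) \<infinity>) (\<lambda>z. gumbel_density z * k z)"
      by (intro sbm continuous_intros dens_cont lipschitz_on_continuous_on[OF L]) auto
    show "AE x in lborel. x \<in> einterval (ereal a) \<infinity> \<longrightarrow>
      norm (gumbel_density x * k x) \<le> norm (exp (- x) * (K + x))"
    proof (intro AE_I2 impI)
      fix x assume "x \<in> einterval (ereal a) \<infinity>"
      then have ax: "a < x" by simp
      have "\<bar>k x - k 0\<bar> \<le> \<bar>x\<bar>" using lipschitz_onD[OF L, of x 0] by (simp add: dist_real_def)
      then have k: "\<bar>k x\<bar> \<le> K + x" using ax unfolding K_def by linarith
      have "norm (gumbel_density x * k x) = gumbel_density x * \<bar>k x\<bar>"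
        using dens_nonneg by (simp add: abs_mult)
      also have "\<dots> \<le> exp (- x) * (K + x)"
        by (rule mult_mono[OF dens_le_exp k]) auto
      also have "\<dots> = norm (exp (- x) * (K + x))"
        using k by (simp add: abs_mult)
      finally show "norm (gumbel_density x * k x) \<le> norm (exp (- x) * (K + x))" .
    qed
  qed
qed

lemma H_deriv:
  fixes k :: "real \<Rightarrow> real"
  assumes L: "1-lipschitz_on UNIV k"
  shows "((\<lambda>a. LBINT z=ereal a..\<infinity>. gumbel_density z * k z) has_real_derivative
           - (gumbel_density a0 * k a0)) (at a0)"
proof -
  let ?h = "\<lambda>z. gumbel_density z * k z"
  have cont: "continuous_on UNIV ?h"
    by (intro continuous_intros dens_cont lipschitz_on_continuous_on[OF L])
  have eq: "(LBINT z=ereal a..\<infinity>. ?h z) =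
      (LBINT z=ereal (a0 - 1)..\<infinity>. ?h z) - (LBINT z=ereal (a0 - 1)..ereal a. ?h z)" for a
  proof -
    have "interval_lebesgue_integrable lborel (min (ereal (a0 - 1)) (min (ereal a) \<infinity>))
        (max (ereal (a0 - 1)) (max (ereal a) \<infinity>)) ?h"
      using tail_integrable[OF L, of "min (a0 - 1) a"]
      by (cases "a0 - 1 \<le> a") (simp_all add: interval_lebesgue_integrable_def min_def)
    from interval_integral_sum[OF this] show ?thesis by simp
  qed
  have "((\<lambda>u. LBINT y=(a0 - 1)..u. ?h y) has_vector_derivative ?h a0) (at a0 within {a0 - 1..a0 + 1})"
    by (rule interval_integral_FTC2) (auto intro: continuous_on_subset[OF cont])
  then have "((\<lambda>u. LBINT y=(a0 - 1)..u. ?h y) has_real_derivative ?h a0) (at a0)"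
    by (simp add: at_within_Icc_at has_real_derivative_iff_has_vector_derivative)
  then have "((\<lambda>a. (LBINT z=ereal (a0 - 1)..\<infinity>. ?h z) - (LBINT z=ereal (a0 - 1)..ereal a. ?h z))
      has_real_derivative 0 - ?h a0) (at a0)"
    by (intro derivative_intros)
  then show ?thesis unfolding eq[symmetric] by simp
qed

lemma shift_lip:
  fixes f :: "real \<Rightarrow> real"
  assumes "C-lipschitz_on UNIV f"
  shows "C-lipschitz_on UNIV (\<lambda>z. f (z + c))"
proof -
  have "\<bar>f (x + c) - f (y + c)\<bar> \<le> C * \<bar>x - y\<bar>" for x y
    using lipschitz_onD[OF assms, of "x + c" "y + c"] by (simp add: dist_real_def)
  then show ?thesis using lipschitz_on_nonneg[OF assms]
    by (intro lipschitz_onI) (auto simp: dist_real_def)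
qed

lemma P0_repr:
  fixes f :: "real \<Rightarrow> real"
  assumes t: "t > 0" and L: "1-lipschitz_on UNIV f"
  defines "c \<equiv> ln (1 - exp (- t))"
  shows "P0 t f x = f (x - t) * G (x - t - c) + (LBINT z=ereal (x - t - c)..\<infinity>. gumbel_density z * f (z + c))"
proof -
  define a where "a = x - t - c"
  let ?phi = "\<lambda>z. gumbel_density z * f (max (x - t) (z + c))"
  let ?p1 = "\<lambda>z. indicator (einterval (-\<infinity>) (ereal a)) z *\<^sub>R (gumbel_density z * f (x - t))"
  let ?p2 = "\<lambda>z. indicator (einterval (ereal a) \<infinity>) z *\<^sub>R (gumbel_density z * f (z + c))"
  have i1: "integrable lborel ?p1"
  proof -
    have "integrable lborel (\<lambda>z. (indicator (einterval (-\<infinity>) (ereal a)) z *\<^sub>R gumbel_density z) * f (x - t))"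
      by (rule integrable_mult_left) (use G_integral(1)[of a] in \<open>simp add: set_integrable_def\<close>)
    then show ?thesis by (simp add: mult.assoc)
  qed
  have i2: "integrable lborel ?p2"
    using tail_integrable[OF shift_lip[OF L], of a c] unfolding set_integrable_def by simp
  have pw: "?phi z = ?p1 z + ?p2 z" if "z \<notin> {a}" for z
  proof (cases "z < a")
    case True
    then show ?thesis by (simp add: a_def max_def indicator_def)
  next
    case False
    with that have "a < z" by simp
    then show ?thesis by (simp add: a_def max_def indicator_def)
  qed
  have "P0 t f x = (\<integral>z. ?phi z \<partial>lborel)"
    using t by (simp add: P0_def c_def)
  also have "\<dots> = (\<integral>z. ?p1 z + ?p2 z \<partial>lborel)"
    by (rule integral_discrete_difference[of "{a}"]) (use pw in auto)
  also have "\<dots> = (\<integral>z. ?p1 z \<partial>lborel) + (\<integral>z. ?p2 z \<partial>lborel)"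
    by (rule Bochner_Integration.integral_add[OF i1 i2])
  also have "(\<integral>z. ?p1 z \<partial>lborel) = f (x - t) * G a"
  proof -
    have "(\<integral>z. ?p1 z \<partial>lborel) = (\<integral>z. indicator (einterval (-\<infinity>) (ereal a)) z *\<^sub>R gumbel_density z \<partial>lborel) * f (x - t)"
      by (subst integral_mult_left_zero[symmetric]) (simp add: mult.assoc)
    also have "(\<integral>z. indicator (einterval (-\<infinity>) (ereal a)) z *\<^sub>R gumbel_density z \<partial>lborel) = G a"
      using G_integral(2)[of a] by (simp add: interval_lebesgue_integral_def set_lebesgue_integral_def)
    finally show ?thesis by simp
  qed
  also have "(\<integral>z. ?p2 z \<partial>lborel) = (LBINT z=ereal a..\<infinity>. gumbel_density z * f (z + c))"
    by (simp add: interval_lebesgue_integral_def set_lebesgue_integral_def)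
  finally show ?thesis by (simp add: a_def)
qed

lemma P0_deriv:
  fixes f f' :: "real \<Rightarrow> real"
  assumes t: "t > 0" and L: "1-lipschitz_on UNIV f" and D: "\<And>y. (f has_real_derivative f' y) (at y)"
  defines "c \<equiv> ln (1 - exp (- t))"
  shows "(P0 t f has_real_derivative f' (x - t) * G (x - t - c)) (at x)"
proof -
  let ?H = "\<lambda>a. LBINT z=ereal a..\<infinity>. gumbel_density z * f (z + c)"
  have eq: "P0 t f = (\<lambda>x. f (x - t) * G (x - t - c) + ?H (x - t - c))"
    using P0_repr[OF t L] unfolding c_def by auto
  have d0: "((\<lambda>x. x - t - c) has_real_derivative 1) (at x)"
    by (auto intro!: derivative_eq_intros)
  have d1: "((\<lambda>x. f (x - t)) has_real_derivative f' (x - t)) (at x)"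
  proof -
    have "((\<lambda>x. x - t) has_real_derivative 1) (at x)" by (auto intro!: derivative_eq_intros)
    from DERIV_chain2[OF D this] show ?thesis by simp
  qed
  have d2: "((\<lambda>x. G (x - t - c)) has_real_derivative gumbel_density (x - t - c)) (at x)"
    using DERIV_chain2[OF G_deriv d0] by simp
  have d3: "((\<lambda>x. ?H (x - t - c)) has_real_derivative - (gumbel_density (x - t - c) * f (x - t - c + c))) (at x)"
    using DERIV_chain2[OF H_deriv[OF shift_lip[OF L, of c]] d0] by simp
  have d12: "((\<lambda>x. f (x - t) * G (x - t - c)) has_real_derivative
     f' (x - t) * G (x - t - c) + gumbel_density (x - t - c) * f (x - t)) (at x)"
    by (rule DERIV_mult[OF d1 d2])
  from DERIV_add[OF d12 d3]
  have "((\<lambda>x. f (x - t) * G (x - t - c) + ?H (x - t - c)) has_real_derivative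
     (f' (x - t) * G (x - t - c) + gumbel_density (x - t - c) * f (x - t))
       + - (gumbel_density (x - t - c) * f (x - t - c + c))) (at x)" .
  then show ?thesis unfolding eq by simp
qed

lemma exp_int: "set_integrable lborel {0..} (\<lambda>y. exp (- y) :: real)"
proof -
  have d: "\<And>x. ((\<lambda>y. - exp (- y)) has_real_derivative exp (- x)) (at x)"
    by (auto intro!: derivative_eq_intros)
  have c: "\<And>x. isCont (\<lambda>y. exp (- y) :: real) x" by (intro continuous_intros)
  have limA: "((\<lambda>y. - exp (- y) :: real) \<longlongrightarrow> - 1) (at_right 0)"
    by real_asymp
  have limB: "((\<lambda>y. - exp (- y) :: real) \<longlongrightarrow> 0) at_top"
    by real_asymp
  have "set_integrable lborel (einterval (ereal 0) \<infinity>) (\<lambda>y. exp (- y) :: real)"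
    using interval_integral_FTC_nonneg(1)[of "ereal 0" \<infinity> "\<lambda>y. - exp (- y)" "\<lambda>y. exp (- y)" "- 1" 0, OF _ d c]
      limA limB by (auto simp: ereal_tendsto_simps1)
  then show ?thesis
    by (subst set_integrable_discrete_difference[where X="{0}" and B="{0<..}"]) auto
qed

lemma bounded_int:
  fixes h :: "real \<Rightarrow> real"
  assumes c: "continuous_on UNIV h" and b: "\<And>y. \<bar>h y\<bar> \<le> B"
  shows "set_integrable lborel {0..} (\<lambda>y. exp (- y) * h (x + y))"
proof (rule set_integrable_bound)
  show "set_integrable lborel {0..} (\<lambda>y. B * exp (- y))"
    using exp_int by auto
  show "set_borel_measurable lborel {0..} (\<lambda>y. exp (- y) * h (x + y))"
    by (intro sbm continuous_intros continuous_on_compose2[OF c]) auto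
  show "AE y in lborel. y \<in> {0..} \<longrightarrow> norm (exp (- y) * h (x + y)) \<le> norm (B * exp (- y))"
  proof (intro AE_I2 impI)
    fix y :: real
    have "\<bar>h (x + y)\<bar> \<le> \<bar>B\<bar>" using b[of "x + y"] by simp
    then show "norm (exp (- y) * h (x + y)) \<le> norm (B * exp (- y))"
      by (simp add: abs_mult mult.commute mult_left_mono)
  qed
qed

lemma J_bound:
  fixes A x :: real
  assumes A: "A > 0"
  shows "set_integrable lborel {0..} (\<lambda>y. exp (- y) * exp (- A * exp (- (x + y))))"
    "(LINT y:{0..}|lborel. exp (- y) * exp (- A * exp (- (x + y)))) \<le> exp x / A"
proof -
  let ?j = "\<lambda>y. exp (- y) * exp (- A * exp (- (x + y)))"
  define F where "F y = exp x / A * exp (- A * exp (- (x + y)))" for y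
  have d: "\<And>y. (F has_real_derivative ?j y) (at y)"
  proof -
    fix y
    have dF: "(F has_real_derivative exp x / A * (exp (- A * exp (- (x + y))) * (A * exp (- (x + y))))) (at y)"
      unfolding F_def by (auto intro!: derivative_eq_intros)
    have ex: "exp x * exp (- (x + y)) = exp (- y)" by (simp add: exp_add[symmetric])
    have e1: "exp x / A * (exp (- A * exp (- (x + y))) * (A * exp (- (x + y))))
        = (exp x * exp (- (x + y))) * exp (- A * exp (- (x + y)))"
      using A by simp
    have e2: "exp x / A * (exp (- A * exp (- (x + y))) * (A * exp (- (x + y)))) = ?j y"
      unfolding e1 ex ..
    from dF show "(F has_real_derivative ?j y) (at y)" by (simp only: e2)
  qed
  have c: "\<And>y. isCont ?j y" by (intro continuous_intros)
  have limA: "(F \<longlongrightarrow> F 0) (at_right 0)"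
    unfolding F_def by (intro tendsto_intros)
  have limB: "(F \<longlongrightarrow> exp x / A) at_top"
  proof -
    have "((\<lambda>y. exp (- A * exp (- (x + y)))) \<longlongrightarrow> 1) at_top"
      using A by real_asymp
    then show ?thesis unfolding F_def using tendsto_mult_left[of _ 1 at_top "exp x / A"] by simp
  qed
  have nn: "AE y in lborel. ereal 0 < ereal y \<longrightarrow> ereal y < \<infinity> \<longrightarrow> 0 \<le> ?j y"
    by (intro AE_I2) auto
  note R = interval_integral_FTC_nonneg[of "ereal 0" \<infinity> F ?j "F 0" "exp x / A", OF _ d c nn]
  have I: "set_integrable lborel (einterval (ereal 0) \<infinity>) ?j"
    "(LBINT y=ereal 0..\<infinity>. ?j y) = exp x / A - F 0"
    using R limA limB by (auto simp: ereal_tendsto_simps1)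
  show "set_integrable lborel {0..} ?j"
    using I(1) by (subst set_integrable_discrete_difference[where X="{0}" and B="{0<..}"]) auto
  have "(LINT y:{0..}|lborel. ?j y) = (LINT y:{0<..}|lborel. ?j y)"
    by (rule set_integral_discrete_difference[where X="{0}"]) auto
  also have "\<dots> = exp x / A - F 0"
    using I(2) by (simp add: interval_integral_Ioi)
  also have "\<dots> \<le> exp x / A"
    using A by (simp add: F_def)
  finally show "(LINT y:{0..}|lborel. ?j y) \<le> exp x / A" .
qed

lemma G_shift:
  assumes t: "t > (0::real)"
  shows "G (w - t - ln (1 - exp (- t))) = exp (- (exp t - 1) * exp (- w))"
proof -
  have q: "1 - exp (- t) > 0" using t by simp
  have "- (w - t - ln (1 - exp (- t))) = - w + t + ln (1 - exp (- t))" by simp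
  then have "exp (- (w - t - ln (1 - exp (- t)))) = exp (- w) * exp t * exp (ln (1 - exp (- t)))"
    by (simp only: exp_add)
  also have "\<dots> = exp (- w) * exp t * (1 - exp (- t))" using q by simp
  also have "\<dots> = (exp t - 1) * exp (- w)"
    by (simp add: algebra_simps exp_minus)
  finally show ?thesis by (simp add: G_def algebra_simps)
qed

theorem corollary2p5:
  fixes f :: "real \<Rightarrow> real"
  assumes "lip2 f"
    and "1-lipschitz_on UNIV f"
    and "1-lipschitz_on UNIV (deriv f)"
  shows "\<forall>t\<ge>0. lip2 (P0 t f) \<and> 1-lipschitz_on UNIV (P0 t f)
           \<and> 2-lipschitz_on UNIV (deriv (P0 t f))
           \<and> (\<forall>x. set_integrable lborel {0..} (\<lambda>y. exp (- y) * deriv (P0 t f) (x + y)))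
           \<and> (t > 0 \<longrightarrow> (\<forall>x. \<bar>L0 (P0 t f) x\<bar> \<le> 2 / (1 - exp (- t)) * (SUP y. \<bar>deriv f y\<bar>)))"
proof (intro allI impI)
  fix t :: real assume t0: "t \<ge> 0"
  from assms(1) obtain f' where D: "\<And>x. (f has_real_derivative f' x) (at x)"
    unfolding lip2_def by blast
  have df: "deriv f = f'" using D by (auto intro!: DERIV_imp_deriv)
  have Lf': "1-lipschitz_on UNIV f'" using assms(3) df by simp
  have f'b: "\<bar>f' y\<bar> \<le> 1" for y by (rule deriv_bound_of_lip[OF assms(2) D])
  define S where "S = (SUP y. \<bar>f' y\<bar>)"
  have bdd: "bdd_above (range (\<lambda>y. \<bar>f' y\<bar>))" using f'b by (intro bdd_aboveI[where M=1]) auto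
  have Sb: "\<bar>f' y\<bar> \<le> S" for y unfolding S_def by (rule cSUP_upper[OF _ bdd]) simp
  have S0: "0 \<le> S" using Sb[of 0] by linarith
  have cf': "continuous_on UNIV f'" by (rule lipschitz_on_continuous_on[OF Lf'])
  show "lip2 (P0 t f) \<and> 1-lipschitz_on UNIV (P0 t f)
           \<and> 2-lipschitz_on UNIV (deriv (P0 t f))
           \<and> (\<forall>x. set_integrable lborel {0..} (\<lambda>y. exp (- y) * deriv (P0 t f) (x + y)))
           \<and> (t > 0 \<longrightarrow> (\<forall>x. \<bar>L0 (P0 t f) x\<bar> \<le> 2 / (1 - exp (- t)) * (SUP y. \<bar>deriv f y\<bar>)))"
  proof (cases "t = 0")
    case True
    have P: "P0 t f = f" using True by (auto simp: P0_def)
    show ?thesis unfolding P df using True assms(1,2) Lf'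
      by (auto intro: lipschitz_on_mono bounded_int[OF cf' f'b])
  next
    case False
    with t0 have t: "t > 0" by simp
    define c where "c = ln (1 - exp (- t))"
    define gd where "gd x = f' (x - t) * G (x - t - c)" for x
    have DP: "(P0 t f has_real_derivative gd x) (at x)" for x
      unfolding gd_def c_def by (rule P0_deriv[OF t assms(2) D])
    have dP: "deriv (P0 t f) = gd" using DP by (auto intro!: DERIV_imp_deriv)
    have gdS: "\<bar>gd x\<bar> \<le> \<bar>f' (x - t)\<bar>" for x
      unfolding gd_def using G_nonneg G_le1
      by (simp add: abs_mult mult_left_le)
    have gd1: "\<bar>gd x\<bar> \<le> 1" for x using gdS[of x] f'b[of "x - t"] by linarith
    have L1: "1-lipschitz_on UNIV (P0 t f)"
      by (rule lip_of_deriv[OF DP gd1]) simp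
    have L2: "2-lipschitz_on UNIV gd"
    proof (rule lipschitz_onI)
      fix x y :: real
      have a1: "\<bar>f' (x - t) - f' (y - t)\<bar> \<le> \<bar>x - y\<bar>"
        using lipschitz_onD[OF Lf', of "x - t" "y - t"] by (simp add: dist_real_def)
      have a2: "\<bar>G (x - t - c) - G (y - t - c)\<bar> \<le> \<bar>x - y\<bar>"
        using lipschitz_onD[OF G_lip, of "x - t - c" "y - t - c"] by (simp add: dist_real_def)
      have "gd x - gd y = (f' (x - t) - f' (y - t)) * G (x - t - c) + f' (y - t) * (G (x - t - c) - G (y - t - c))"
        unfolding gd_def by (simp add: algebra_simps)
      then have "\<bar>gd x - gd y\<bar> \<le> \<bar>f' (x - t) - f' (y - t)\<bar> * \<bar>G (x - t - c)\<bar> + \<bar>f' (y - t)\<bar> * \<bar>G (x - t - c) - G (y - t - c)\<bar>"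
        by (simp add: abs_mult[symmetric] abs_triangle_ineq)
      also have "\<dots> \<le> \<bar>x - y\<bar> * 1 + 1 * \<bar>x - y\<bar>"
        using a1 a2 f'b[of "y - t"] G_nonneg[of "x - t - c"] G_le1[of "x - t - c"]
        by (intro add_mono mult_mono) auto
      finally show "dist (gd x) (gd y) \<le> 2 * dist x y" by (simp add: dist_real_def)
    qed simp
    have cgd: "continuous_on UNIV gd" by (rule lipschitz_on_continuous_on[OF L2])
    have lip: "lip2 (P0 t f)"
      unfolding lip2_def using L1 L2 DP by blast
    have INT: "set_integrable lborel {0..} (\<lambda>y. exp (- y) * gd (x + y))" for x
      by (rule bounded_int[OF cgd gd1])
    define A where "A = exp t - 1"
    have A: "A > 0" using t by (simp add: A_def)
    have bound: "\<bar>L0 (P0 t f) x\<bar> \<le> 2 / (1 - exp (- t)) * S" for x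
    proof -
      let ?I = "LINT y:{0..}|lborel. exp (- y) * gd (x + y)"
      let ?j = "\<lambda>y. exp (- y) * exp (- A * exp (- (x + y)))"
      have L0e: "L0 (P0 t f) x = - gd x + exp (- x) * ?I"
        by (simp add: L0_def dP)
      have pw: "\<bar>exp (- y) * gd (x + y)\<bar> \<le> S * ?j y" for y
      proof -
        have "G (x + y - t - c) = exp (- A * exp (- (x + y)))"
          unfolding c_def A_def by (rule G_shift[OF t])
        then have "\<bar>gd (x + y)\<bar> \<le> S * exp (- A * exp (- (x + y)))"
          unfolding gd_def using G_nonneg[of "x + y - t - c"] Sb[of "x + y - t"]
          by (simp add: abs_mult mult_right_mono)
        then show ?thesis
          by (simp add: abs_mult mult_left_mono mult.left_commute)
      qed
      have "\<bar>?I\<bar> \<le> (LINT y:{0..}|lborel. \<bar>exp (- y) * gd (x + y)\<bar>)"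
        using set_integral_norm_bound[OF INT[of x]] by simp
      also have "\<dots> \<le> (LINT y:{0..}|lborel. S * ?j y)"
        by (rule set_integral_mono[OF set_integrable_abs[OF INT[of x]]])
           (use J_bound(1)[OF A, of x] pw in auto)
      also have "\<dots> = S * (LINT y:{0..}|lborel. ?j y)" by simp
      also have "\<dots> \<le> S * (exp x / A)"
        by (rule mult_left_mono[OF J_bound(2)[OF A] S0])
      finally have Ib: "\<bar>?I\<bar> \<le> S * (exp x / A)" .
      have "\<bar>L0 (P0 t f) x\<bar> \<le> \<bar>gd x\<bar> + exp (- x) * \<bar>?I\<bar>"
        unfolding L0e using abs_triangle_ineq[of "- gd x" "exp (- x) * ?I"] by (simp add: abs_mult)
      also have "\<dots> \<le> S + exp (- x) * (S * (exp x / A))"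
        using gdS[of x] Sb[of "x - t"] Ib by (intro add_mono mult_left_mono) auto
      also have "\<dots> = S * (1 + 1 / A)"
        by (simp add: exp_minus field_simps)
      also have "1 + 1 / A = 1 / (1 - exp (- t))"
        using A unfolding A_def by (simp add: exp_minus field_simps)
      also have "S * (1 / (1 - exp (- t))) \<le> 2 / (1 - exp (- t)) * S"
      proof -
        have q: "0 < 1 - exp (- t)" using t by simp
        have "1 / (1 - exp (- t)) \<le> 2 / (1 - exp (- t))"
          using q by (intro divide_right_mono) auto
        from mult_right_mono[OF this S0] show ?thesis by (simp only: mult.commute)
      qed
      finally show ?thesis .
    qed
    show ?thesis
      using lip L1 L2 INT bound unfolding dP df S_def by auto
  qed
qed

end
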